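(* Let $A$ be a fuzzy ideal of a fuzzy Riesz space $(E,\mu)$ and let $T:E\rightarrow E/A$, $Tf=[f]$, be the canonical projection, where $E/A$ carries the fuzzy order $\nu$ described in the context. Then $T$ is a fuzzy Riesz homomorphism.
   Context: A fuzzy order on a real vector space $E$ is a map $\mu:E\times E\to[0,1]$ with $\mu(x,x)=1$; $\mu(x,y)+\mu(y,x)>1$ implies $x=y$; and $\mu(x,z)\ge\sup_{y}\min(\mu(x,y),\mu(y,z))$. Write $x\le y$ for $\mu(x,y)>\frac12$; suprema/infima are taken with respect to this relation. $(E,\mu)$ is a fuzzy ordered linear space if $\mu(x_1,x_2)>\frac12$ implies $\mu(x_1,x_2)\le\mu(x_1+x,x_2+x)$ for all $x$ and $\mu(x_1,x_2)\le\mu(\alpha x_1,\alpha x_2)$ for all $\alpha>0$; it is a fuzzy Riesz space if $x\vee y=\sup\{x,y\}$ and $x\wedge y=\inf\{x,y\}$ exist for all $x,y$. $|x|=x\vee(-x)$. A fuzzy ideal is a vector subspace $A$ such that $\mu(|x|,|y|)>\frac12$ and $y\in A$ imply $x\in A$. For $f\in E$, $[f]=f+A$, $E/A$ is the quotient vector space, and $\nu([f],[g])=1$ if $[f]=[g]$; $\nu([f],[g])=\frac23$ if $[f]\ne[g]$ and there exist $f_1\in[f]$, $g_1\in[g]$ with $\mu(f_1,g_1)>\frac12$; $\nu([f],[g])=0$ otherwise. $(E/A,\nu)$ is a fuzzy Riesz space. A fuzzy Riesz homomorphism is a linear map with $T(x\vee y)=Tx\vee Ty$. *)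

theory Defs
  imports Main "HOL.Real_Vector_Spaces"
begin

definition fuzzy_order_on :: "'b set \<Rightarrow> ('b \<Rightarrow> 'b \<Rightarrow> real) \<Rightarrow> bool" where
  "fuzzy_order_on S \<mu> \<longleftrightarrow>
     (\<forall>x\<in>S. \<forall>y\<in>S. 0 \<le> \<mu> x y \<and> \<mu> x y \<le> 1) \<and>
     (\<forall>x\<in>S. \<mu> x x = 1) \<and>
     (\<forall>x\<in>S. \<forall>y\<in>S. \<mu> x y + \<mu> y x > 1 \<longrightarrow> x = y) \<and>
     (\<forall>x\<in>S. \<forall>z\<in>S. \<forall>y\<in>S. min (\<mu> x y) (\<mu> y z) \<le> \<mu> x z)"

definition fle :: "('b \<Rightarrow> 'b \<Rightarrow> real) \<Rightarrow> 'b \<Rightarrow> 'b \<Rightarrow> bool" where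
  "fle \<mu> x y \<longleftrightarrow> \<mu> x y > 1/2"

definition is_fsup_on :: "'b set \<Rightarrow> ('b \<Rightarrow> 'b \<Rightarrow> real) \<Rightarrow> 'b set \<Rightarrow> 'b \<Rightarrow> bool" where
  "is_fsup_on S \<mu> X s \<longleftrightarrow> s \<in> S \<and> (\<forall>x\<in>X. fle \<mu> x s) \<and>
     (\<forall>u\<in>S. (\<forall>x\<in>X. fle \<mu> x u) \<longrightarrow> fle \<mu> s u)"

definition is_finf_on :: "'b set \<Rightarrow> ('b \<Rightarrow> 'b \<Rightarrow> real) \<Rightarrow> 'b set \<Rightarrow> 'b \<Rightarrow> bool" where
  "is_finf_on S \<mu> X s \<longleftrightarrow> s \<in> S \<and> (\<forall>x\<in>X. fle \<mu> s x) \<and>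
     (\<forall>u\<in>S. (\<forall>x\<in>X. fle \<mu> u x) \<longrightarrow> fle \<mu> u s)"

definition fsup :: "('a \<Rightarrow> 'a \<Rightarrow> real) \<Rightarrow> 'a \<Rightarrow> 'a \<Rightarrow> 'a" where
  "fsup \<mu> x y = (THE s. is_fsup_on UNIV \<mu> {x, y} s)"

definition finf :: "('a \<Rightarrow> 'a \<Rightarrow> real) \<Rightarrow> 'a \<Rightarrow> 'a \<Rightarrow> 'a" where
  "finf \<mu> x y = (THE s. is_finf_on UNIV \<mu> {x, y} s)"

definition fabs :: "('a::real_vector \<Rightarrow> 'a \<Rightarrow> real) \<Rightarrow> 'a \<Rightarrow> 'a" where
  "fabs \<mu> x = fsup \<mu> x (- x)"

definition fuzzy_ordered_linear_space :: "('a::real_vector \<Rightarrow> 'a \<Rightarrow> real) \<Rightarrow> bool" where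
  "fuzzy_ordered_linear_space \<mu> \<longleftrightarrow> fuzzy_order_on UNIV \<mu> \<and>
     (\<forall>x1 x2. \<mu> x1 x2 > 1/2 \<longrightarrow>
        (\<forall>x. \<mu> x1 x2 \<le> \<mu> (x1 + x) (x2 + x)) \<and>
        (\<forall>\<alpha>::real. \<alpha> > 0 \<longrightarrow> \<mu> x1 x2 \<le> \<mu> (\<alpha> *\<^sub>R x1) (\<alpha> *\<^sub>R x2)))"

definition fuzzy_riesz_space :: "('a::real_vector \<Rightarrow> 'a \<Rightarrow> real) \<Rightarrow> bool" where
  "fuzzy_riesz_space \<mu> \<longleftrightarrow> fuzzy_ordered_linear_space \<mu> \<and>
     (\<forall>x y. \<exists>s. is_fsup_on UNIV \<mu> {x, y} s) \<and>
     (\<forall>x y. \<exists>s. is_finf_on UNIV \<mu> {x, y} s)"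

definition fuzzy_ideal :: "('a::real_vector \<Rightarrow> 'a \<Rightarrow> real) \<Rightarrow> 'a set \<Rightarrow> bool" where
  "fuzzy_ideal \<mu> A \<longleftrightarrow> subspace A \<and>
     (\<forall>x y. \<mu> (fabs \<mu> x) (fabs \<mu> y) > 1/2 \<and> y \<in> A \<longrightarrow> x \<in> A)"

definition coset :: "'a::real_vector set \<Rightarrow> 'a \<Rightarrow> 'a set" where
  "coset A f = (\<lambda>a. f + a) ` A"

definition quot :: "'a::real_vector set \<Rightarrow> 'a set set" where
  "quot A = range (coset A)"

definition rep :: "'a set \<Rightarrow> 'a" where
  "rep X = (SOME f. f \<in> X)"

definition qadd :: "'a::real_vector set \<Rightarrow> 'a set \<Rightarrow> 'a set \<Rightarrow> 'a set" where
  "qadd A X Y = coset A (rep X + rep Y)"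

definition qscale :: "'a::real_vector set \<Rightarrow> real \<Rightarrow> 'a set \<Rightarrow> 'a set" where
  "qscale A c X = coset A (c *\<^sub>R rep X)"

definition quot_nu :: "('a::real_vector \<Rightarrow> 'a \<Rightarrow> real) \<Rightarrow> 'a set \<Rightarrow> 'a set \<Rightarrow> 'a set \<Rightarrow> real" where
  "quot_nu \<mu> A X Y =
     (if X = Y then 1
      else if \<exists>f1\<in>X. \<exists>g1\<in>Y. \<mu> f1 g1 > 1/2 then 2/3 else 0)"

definition quot_fuzzy_riesz_hom ::
  "('a::real_vector \<Rightarrow> 'a \<Rightarrow> real) \<Rightarrow> 'a set \<Rightarrow> ('a \<Rightarrow> 'a set) \<Rightarrow> bool" where
  "quot_fuzzy_riesz_hom \<mu> A T \<longleftrightarrow>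
     (\<forall>x. T x \<in> quot A) \<and>
     (\<forall>x y. T (x + y) = qadd A (T x) (T y)) \<and>
     (\<forall>c x. T (c *\<^sub>R x) = qscale A c (T x)) \<and>
     (\<forall>x y. is_fsup_on (quot A) (quot_nu \<mu> A) {T x, T y} (T (fsup \<mu> x y)))"

end

theory Submission
  imports Defs
begin

context
  fixes \<mu> :: "'a::real_vector \<Rightarrow> 'a \<Rightarrow> real"
  assumes F: "fuzzy_riesz_space \<mu>"
begin

lemma FO: "fuzzy_order_on UNIV \<mu>"
  using F unfolding fuzzy_riesz_space_def fuzzy_ordered_linear_space_def by blast

lemma frefl: "fle \<mu> x x"
  using FO unfolding fuzzy_order_on_def fle_def by auto

lemma ftrans: "fle \<mu> x y \<Longrightarrow> fle \<mu> y z \<Longrightarrow> fle \<mu> x z"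
proof -
  assume a: "fle \<mu> x y" "fle \<mu> y z"
  have "min (\<mu> x y) (\<mu> y z) \<le> \<mu> x z"
    using FO unfolding fuzzy_order_on_def by blast
  moreover have "min (\<mu> x y) (\<mu> y z) > 1/2" using a unfolding fle_def by simp
  ultimately show ?thesis unfolding fle_def by linarith
qed

lemma fantisym: "fle \<mu> x y \<Longrightarrow> fle \<mu> y x \<Longrightarrow> x = y"
  using FO unfolding fuzzy_order_on_def fle_def by force

lemma ftransl: "fle \<mu> x y \<Longrightarrow> fle \<mu> (x + z) (y + z)"
  using F unfolding fuzzy_riesz_space_def fuzzy_ordered_linear_space_def fle_def
  by (meson less_le_trans)

lemma fscale: "fle \<mu> x y \<Longrightarrow> (c::real) > 0 \<Longrightarrow> fle \<mu> (c *\<^sub>R x) (c *\<^sub>R y)"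
  using F unfolding fuzzy_riesz_space_def fuzzy_ordered_linear_space_def fle_def
  by (meson less_le_trans)

lemma fadd: "fle \<mu> x y \<Longrightarrow> fle \<mu> z w \<Longrightarrow> fle \<mu> (x + z) (y + w)"
proof -
  assume a: "fle \<mu> x y" "fle \<mu> z w"
  have "fle \<mu> (x + z) (y + z)" using ftransl[OF a(1)] .
  moreover have "fle \<mu> (z + y) (w + y)" using ftransl[OF a(2)] .
  hence "fle \<mu> (y + z) (y + w)" by (simp add: add.commute)
  ultimately show ?thesis using ftrans by blast
qed

lemma fsup_is: "is_fsup_on UNIV \<mu> {x, y} (fsup \<mu> x y)"
proof -
  obtain s where s: "is_fsup_on UNIV \<mu> {x, y} s"
    using F unfolding fuzzy_riesz_space_def by blast
  have u: "\<And>t. is_fsup_on UNIV \<mu> {x, y} t \<Longrightarrow> t = s"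
    using s fantisym unfolding is_fsup_on_def by blast
  have "fsup \<mu> x y = s" unfolding fsup_def using s u by (rule the_equality)
  thus ?thesis using s by (simp only:)
qed

lemma fsup_ub1: "fle \<mu> x (fsup \<mu> x y)"
  using fsup_is[of x y] unfolding is_fsup_on_def by blast

lemma fsup_ub2: "fle \<mu> y (fsup \<mu> x y)"
  using fsup_is[of x y] unfolding is_fsup_on_def by blast

lemma fsup_least: "fle \<mu> x u \<Longrightarrow> fle \<mu> y u \<Longrightarrow> fle \<mu> (fsup \<mu> x y) u"
proof -
  assume a: "fle \<mu> x u" "fle \<mu> y u"
  have "\<forall>u\<in>UNIV. (\<forall>z\<in>{x, y}. fle \<mu> z u) \<longrightarrow> fle \<mu> (fsup \<mu> x y) u"
    using fsup_is[of x y] unfolding is_fsup_on_def by (elim conjE)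
  thus ?thesis using a by simp
qed

lemma fsup_eq: "is_fsup_on UNIV \<mu> {x, y} s \<Longrightarrow> fsup \<mu> x y = s"
proof -
  assume s: "is_fsup_on UNIV \<mu> {x, y} s"
  have 1: "fle \<mu> x s" "fle \<mu> y s" using s unfolding is_fsup_on_def by simp_all
  have 2: "fle \<mu> s (fsup \<mu> x y)"
  proof -
    have "\<forall>u\<in>UNIV. (\<forall>z\<in>{x, y}. fle \<mu> z u) \<longrightarrow> fle \<mu> s u"
      using s unfolding is_fsup_on_def by (elim conjE)
    thus ?thesis using fsup_ub1[of x y] fsup_ub2[of y x] by simp
  qed
  show ?thesis by (rule fantisym[OF fsup_least[OF 1] 2])
qed

lemma fabs_nonneg: "fle \<mu> 0 (fabs \<mu> a)"
proof -
  let ?b = "fabs \<mu> a"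
  have "fle \<mu> (a + - a) (?b + ?b)"
    unfolding fabs_def by (rule fadd[OF fsup_ub1 fsup_ub2])
  hence h: "fle \<mu> 0 (?b + ?b)" by (simp only: right_minus)
  have "fle \<mu> ((1/2::real) *\<^sub>R 0) ((1/2::real) *\<^sub>R (?b + ?b))"
    by (rule fscale[OF h]) simp
  moreover have "(1/2::real) *\<^sub>R (?b + ?b) = ?b"
    by (simp flip: scaleR_2)
  ultimately show ?thesis by (simp only: scaleR_zero_right)
qed

lemma fabs_ge: "fle \<mu> a (fabs \<mu> a)"
  unfolding fabs_def by (rule fsup_ub1)

lemma fabs_abs: "fabs \<mu> (fabs \<mu> a) = fabs \<mu> a"
proof -
  let ?b = "fabs \<mu> a"
  have "fle \<mu> (0 + - ?b) (?b + - ?b)" by (rule ftransl[OF fabs_nonneg])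
  hence "fle \<mu> (- ?b) 0" by (simp only: right_minus add_0_left)
  hence h: "fle \<mu> (- ?b) ?b" by (rule ftrans[OF _ fabs_nonneg])
  have "is_fsup_on UNIV \<mu> {?b, - ?b} ?b"
    unfolding is_fsup_on_def using frefl[of ?b] h by blast
  thus ?thesis unfolding fabs_def[of \<mu> ?b] by (rule fsup_eq)
qed

end

lemma coset_shift:
  assumes "subspace A" "d \<in> A"
  shows "coset A (f + d) = coset A f"
proof
  show "coset A (f + d) \<subseteq> coset A f"
  proof
    fix z assume "z \<in> coset A (f + d)"
    then obtain a where "a \<in> A" "z = f + d + a" unfolding coset_def by auto
    hence "d + a \<in> A" "z = f + (d + a)" using assms by (auto simp: subspace_add add.assoc)
    thus "z \<in> coset A f" unfolding coset_def by blast
  qed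
next
  show "coset A f \<subseteq> coset A (f + d)"
  proof
    fix z assume "z \<in> coset A f"
    then obtain a where "a \<in> A" "z = f + a" unfolding coset_def by auto
    hence "a - d \<in> A" "z = (f + d) + (a - d)" using assms by (auto simp: subspace_diff)
    thus "z \<in> coset A (f + d)" unfolding coset_def by blast
  qed
qed

lemma coset_self: "subspace A \<Longrightarrow> f \<in> coset A f"
  unfolding coset_def by (force simp: subspace_0)

lemma coset_mem: "z \<in> coset A f \<Longrightarrow> \<exists>a\<in>A. z = f + a"
  unfolding coset_def by auto

lemma rep_mem: "subspace A \<Longrightarrow> \<exists>a\<in>A. rep (coset A f) = f + a"
  unfolding rep_def by (metis coset_mem coset_self someI_ex)

theorem theorem3p6:
  fixes \<mu> :: "'a::real_vector \<Rightarrow> 'a \<Rightarrow> real" and A :: "'a set"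
  assumes "fuzzy_riesz_space \<mu>"
    and "fuzzy_ideal \<mu> A"
  shows "quot_fuzzy_riesz_hom \<mu> A (coset A)"
proof -
  have S: "subspace A" using assms(2) unfolding fuzzy_ideal_def by blast
  have absA: "fabs \<mu> a \<in> A" if "a \<in> A" for a
    using assms(2) that frefl[OF assms(1)] fabs_abs[OF assms(1)]
    unfolding fuzzy_ideal_def fle_def by metis
  have add: "coset A (x + y) = qadd A (coset A x) (coset A y)" for x y
  proof -
    obtain a b where ab: "a \<in> A" "b \<in> A" "rep (coset A x) = x + a" "rep (coset A y) = y + b"
      using rep_mem[OF S] by metis
    have "qadd A (coset A x) (coset A y) = coset A ((x + y) + (a + b))"
      unfolding qadd_def ab by (simp add: algebra_simps)
    also have "\<dots> = coset A (x + y)" using ab S by (simp add: coset_shift subspace_add)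
    finally show ?thesis by simp
  qed
  have scl: "coset A (c *\<^sub>R x) = qscale A c (coset A x)" for c x
  proof -
    obtain a where a: "a \<in> A" "rep (coset A x) = x + a"
      using rep_mem[OF S] by metis
    have "qscale A c (coset A x) = coset A (c *\<^sub>R x + c *\<^sub>R a)"
      unfolding qscale_def a by (simp add: scaleR_add_right)
    also have "\<dots> = coset A (c *\<^sub>R x)" using a S by (simp add: coset_shift subspace_scale)
    finally show ?thesis by simp
  qed
  have up: "fle (quot_nu \<mu> A) (coset A x) (coset A s)" if "fle \<mu> x s" for x s
    using that coset_self[OF S] unfolding fle_def quot_nu_def by auto
  have down: "\<exists>a\<in>A. fle \<mu> x (u + a)" if "fle (quot_nu \<mu> A) (coset A x) (coset A u)" for x u
  proof (cases "coset A x = coset A u")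
    case True
    then obtain a where "a \<in> A" "x = u + a" using coset_self[OF S, of x] coset_mem by metis
    thus ?thesis using frefl[OF assms(1)] by blast
  next
    case False
    hence "\<exists>f1\<in>coset A x. \<exists>g1\<in>coset A u. \<mu> f1 g1 > 1/2"
      using that unfolding fle_def quot_nu_def by (auto split: if_splits)
    then obtain a1 b1 where ab: "a1 \<in> A" "b1 \<in> A" "fle \<mu> (x + a1) (u + b1)"
      using coset_mem unfolding fle_def by metis
    have "fle \<mu> (x + a1 + - a1) (u + b1 + - a1)" by (rule ftransl[OF assms(1) ab(3)])
    hence "fle \<mu> x (u + (b1 - a1))" by (simp add: algebra_simps)
    moreover have "b1 - a1 \<in> A" using ab S by (simp add: subspace_diff)
    ultimately show ?thesis by blast
  qed
  have sup: "is_fsup_on (quot A) (quot_nu \<mu> A) {coset A x, coset A y} (coset A (fsup \<mu> x y))"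
    for x y
  proof -
    let ?s = "fsup \<mu> x y"
    have "fle (quot_nu \<mu> A) (U) (V)" if "U = coset A x \<or> U = coset A y" and "V = coset A ?s"
      for U V
      using that up fsup_ub1[OF assms(1)] fsup_ub2[OF assms(1)] by blast
    moreover have "fle (quot_nu \<mu> A) (coset A ?s) U"
      if U: "U \<in> quot A" "fle (quot_nu \<mu> A) (coset A x) U" "fle (quot_nu \<mu> A) (coset A y) U" for U
    proof -
      obtain u where u: "U = coset A u" using U(1) unfolding quot_def by blast
      obtain a where a: "a \<in> A" "fle \<mu> x (u + a)" using down U(2) u by blast
      obtain b where b: "b \<in> A" "fle \<mu> y (u + b)" using down U(3) u by blast
      let ?c = "fabs \<mu> a + fabs \<mu> b"
      have cA: "?c \<in> A" using absA a b S by (simp add: subspace_add)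
      have "fle \<mu> (u + a) (u + ?c)"
      proof -
        have "fle \<mu> (a + 0) (fabs \<mu> a + fabs \<mu> b)"
          by (rule fadd[OF assms(1) fabs_ge[OF assms(1)] fabs_nonneg[OF assms(1)]])
        hence "fle \<mu> (a + u) (?c + u)" using ftransl[OF assms(1)] by simp
        thus ?thesis by (simp add: add.commute)
      qed
      hence 1: "fle \<mu> x (u + ?c)" using a ftrans[OF assms(1)] by blast
      have "fle \<mu> (u + b) (u + ?c)"
      proof -
        have "fle \<mu> (0 + b) (fabs \<mu> a + fabs \<mu> b)"
          by (rule fadd[OF assms(1) fabs_nonneg[OF assms(1)] fabs_ge[OF assms(1)]])
        hence "fle \<mu> (b + u) (?c + u)" using ftransl[OF assms(1)] by simp
        thus ?thesis by (simp add: add.commute)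
      qed
      hence 2: "fle \<mu> y (u + ?c)" using b ftrans[OF assms(1)] by blast
      have "fle \<mu> ?s (u + ?c)" using fsup_least[OF assms(1) 1 2] .
      hence "fle (quot_nu \<mu> A) (coset A ?s) (coset A (u + ?c))" by (rule up)
      thus ?thesis using u coset_shift[OF S cA] by simp
    qed
    ultimately show ?thesis unfolding is_fsup_on_def quot_def by auto
  qed
  show ?thesis unfolding quot_fuzzy_riesz_hom_def
    using add scl sup by (auto simp: quot_def)
qed

end
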